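(* Let $a$ be a positive integer and for $m\in\mathbb{N}$ let $A_m=\{n\in\mathbb{N}:n<F_m^{1/a}\}$. Then for every $\beta\in[0,1]$, $$\frac{\#\{n\in A_m:\{\mathfrak F^{-1}(n^a)\}\le\beta\}}{\#A_m}=\frac{\phi^{\beta/a}-1}{\phi^{1/a}-1}+O(m\phi^{-m/a})\quad(m\to\infty).$$
   Context: $F$: $F_1=1,F_2=2,F_{n+2}=F_{n+1}+F_n$; $\phi$ is the golden ratio; $\mathfrak F(x)=\frac{\phi}{\sqrt5}(\phi^x+\phi^{-x}\cos(\pi x)\phi^{-2})$, which is increasing on $[1,\infty)$ with $\mathfrak F(n)=F_n$, and $\mathfrak F^{-1}$ is its inverse on $[1,\infty)$; $\{y\}$ is the fractional part of $y$. *)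

theory Defs
  imports Complex_Main "HOL-Library.Landau_Symbols"
begin

text \<open>Fibonacci numbers with F 1 = 1, F 2 = 2, F (n+2) = F (n+1) + F n
  (F 0 = 1 is an auxiliary value irrelevant for the asymptotic statement).\<close>
fun FibF :: "nat \<Rightarrow> nat" where
  "FibF 0 = 1"
| "FibF (Suc 0) = 1"
| "FibF (Suc (Suc n)) = FibF (Suc n) + FibF n"

definition phi :: real where
  "phi = (1 + sqrt 5) / 2"

definition frakF :: "real \<Rightarrow> real" where
  "frakF x = phi / sqrt 5 * (phi powr x + phi powr (-x) * cos (pi * x) * phi powr (-2))"

definition frakF_inv :: "real \<Rightarrow> real" where
  "frakF_inv y = (THE x. 1 \<le> x \<and> frakF x = y)"

definition A_set :: "nat \<Rightarrow> nat \<Rightarrow> nat set" where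
  "A_set a m = {n. 1 \<le> n \<and> real n < real (FibF m) powr (1 / real a)}"

end

theory Submission
  imports Defs
begin

lemma sqrt5_bounds: "2.2 < sqrt 5" "sqrt 5 < 3"
proof -
  show "2.2 < sqrt 5" by (rule real_less_rsqrt) (simp add: power2_eq_square)
  have "sqrt 5 < sqrt 9" by (simp only: real_sqrt_less_iff)
  also have "sqrt 9 = 3" by (simp add: real_sqrt_unique)
  finally show "sqrt 5 < 3" .
qed

lemma phi_bounds: "1.6 < phi" "phi < 2"
  using sqrt5_bounds unfolding phi_def by simp_all

lemma phi_pos: "phi > 0" using phi_bounds by simp

lemma phi_sq: "phi^2 = phi + 1"
  unfolding phi_def by (simp add: power2_eq_square field_simps)

lemma ln_phi: "ln phi \<ge> 0.375"
proof -
  have "ln (1/phi) \<le> 1/phi - 1" using phi_pos by (intro ln_le_minus_one) simp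
  hence "ln phi \<ge> 1 - 1/phi" using phi_pos by (simp add: ln_div)
  moreover have "1/phi \<le> 1/1.6" using phi_bounds by (intro divide_left_mono) auto
  ultimately show ?thesis by simp
qed

definition cc :: real where "cc = phi / sqrt 5"

lemma frakF_alt: "frakF x = cc * (phi powr x + phi powr (-x-2) * cos (pi*x))"
proof -
  have "phi powr (-x-2) = phi powr (-x) * phi powr (-2)"
    using phi_pos by (simp add: powr_diff powr_minus_divide)
  thus ?thesis unfolding frakF_def cc_def by simp
qed

lemma frakF_nat: "frakF (real n) = cc * (phi ^ n + (-1)^n / phi ^ (n+2))"
proof -
  have "- real n - 2 = - real (n+2)" by simp
  hence "phi powr (- real n - 2) = 1 / phi ^ (n+2)"
    using phi_pos by (simp only: powr_minus_divide powr_realpow)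
  moreover have "phi powr real n = phi ^ n" using phi_pos by (simp add: powr_realpow)
  ultimately show ?thesis unfolding frakF_alt by simp
qed

lemma sqrt5_phi: "phi + 1/phi = sqrt 5"
proof -
  have "1/phi = phi - 1" using phi_sq phi_pos by (simp add: field_simps power2_eq_square)
  hence "phi + 1/phi = 2*phi - 1" by simp
  moreover have "2*phi - 1 = sqrt 5" unfolding phi_def by (simp add: field_simps)
  ultimately show ?thesis by simp
qed

lemma frakF_fib: "frakF (real n) = real (FibF n)"
proof (induction n rule: FibF.induct)
  case 1
  have "phi * (1 + 1/phi^2) = phi + 1/phi" using phi_pos by (simp add: field_simps power2_eq_square)
  hence "cc * (1 + 1/phi^2) = (phi + 1/phi) / sqrt 5" unfolding cc_def by simp
  also have "\<dots> = 1" using sqrt5_phi by simp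
  finally show ?case using frakF_nat[of 0] by (simp add: power2_eq_square)
next
  case 2
  have "phi - 1/phi = 1" using phi_sq phi_pos by (simp add: field_simps power2_eq_square)
  moreover have "phi^2 - 1/phi^2 = (phi - 1/phi) * (phi + 1/phi)" using phi_pos by (simp add: field_simps power2_eq_square)
  ultimately have h: "phi^2 - 1/phi^2 = sqrt 5" using sqrt5_phi by simp
  have "phi * (phi - 1/phi^3) = phi^2 - 1/phi^2" using phi_pos by (simp add: field_simps power2_eq_square power3_eq_cube)
  hence "cc * (phi - 1/phi^3) = (phi^2 - 1/phi^2) / sqrt 5" unfolding cc_def by simp
  also have "\<dots> = 1" using h by simp
  finally show ?case using frakF_nat[of 1] by (simp add: power3_eq_cube mult.assoc)
next
  case (3 n)
  have e: "phi ^ Suc (Suc n) = phi ^ Suc n + phi ^ n"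
  proof -
    have "phi ^ Suc (Suc n) = phi^2 * phi^n" by (simp add: power2_eq_square)
    also have "\<dots> = (phi + 1) * phi ^ n" by (simp add: phi_sq)
    finally show ?thesis by (simp add: algebra_simps)
  qed
  have "frakF (real (Suc (Suc n))) = frakF (real (Suc n)) + frakF (real n)"
  proof -
    define t where "t = (-1::real)^(Suc (Suc n)) / phi^(Suc (Suc n)+2)"
    have t1: "(-1::real)^(Suc (Suc n)) / phi^(Suc (Suc n)+2) = t" unfolding t_def by simp
    have t2: "(-1::real)^(Suc n) / phi^(Suc n+2) = - t * phi" unfolding t_def using phi_pos
      by (simp add: field_simps)
    have t3: "(-1::real)^n / phi^(n+2) = t * phi^2" unfolding t_def using phi_pos
      by (simp add: field_simps power2_eq_square)
    have tt: "t = - t * phi + t * phi^2" using phi_sq by (simp add: algebra_simps)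
    have "phi ^ Suc (Suc n) + t = (phi ^ Suc n + - t * phi) + (phi ^ n + t * phi^2)"
      using e tt by linarith
    hence "cc * (phi ^ Suc (Suc n) + t) = cc * (phi ^ Suc n + - t * phi) + cc * (phi ^ n + t * phi^2)"
      by (simp only: distrib_left[symmetric])
    thus ?thesis unfolding frakF_nat t1 t2 t3 .
  qed
  then show ?case using 3 by simp
qed

definition dF :: "real \<Rightarrow> real" where
  "dF x = cc * (ln phi * phi powr x - ln phi * phi powr (-x-2) * cos (pi*x) - pi * phi powr (-x-2) * sin (pi*x))"

lemma frakF_eq: "frakF = (\<lambda>x. cc * (phi powr x + phi powr (-x-2) * cos (pi*x)))"
  using frakF_alt by auto

lemma frakF_deriv: "(frakF has_real_derivative dF x) (at x)"
  unfolding frakF_eq dF_def using phi_pos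
  by (auto intro!: derivative_eq_intros simp: algebra_simps)

lemma cc_pos: "cc > 0" unfolding cc_def using phi_pos by simp

lemma dF_pos: assumes "1 \<le> x" shows "dF x > 0"
proof -
  define L where "L = ln phi"
  define P where "P = phi powr x"
  define E where "E = phi powr (-x-2)"
  have L: "L \<ge> 0.375" using ln_phi L_def by simp
  have E0: "E > 0" unfolding E_def using phi_pos by simp
  have "phi powr (-x-2) \<le> phi powr 0" using phi_bounds assms by (intro powr_mono) auto
  hence E1: "E \<le> 1" unfolding E_def using phi_pos by simp
  have "phi powr x \<ge> phi powr 1" using phi_bounds assms by (intro powr_mono) auto
  hence P1: "P \<ge> phi" unfolding P_def by simp
  have key: "E * (L * cos (pi*x) + pi * sin (pi*x)) < L * P"
  proof (cases "x \<le> 2")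
    case True
    have "sin (pi*x) \<le> 0"
    proof (cases "x = 2")
      case False
      thus ?thesis using True assms by (intro sin_le_zero) auto
    qed simp
    moreover have "L * cos (pi*x) \<le> L" using L by (intro mult_left_le) auto
    moreover have "pi * sin (pi*x) \<le> 0" using \<open>sin (pi*x) \<le> 0\<close> by (simp add: mult_nonneg_nonpos)
    ultimately have "L * cos (pi*x) + pi * sin (pi*x) \<le> L" by simp
    hence "E * (L * cos (pi*x) + pi * sin (pi*x)) \<le> E * L"
      using E0 by (intro mult_left_mono) auto
    also have "\<dots> \<le> L" using E1 L by (simp add: mult_le_cancel_right1)
    also have "\<dots> < L * P" using P1 phi_bounds L by simp
    finally show ?thesis .
  next
    case False
    have "L * cos (pi*x) + pi * sin (pi*x) \<le> L + 4"
    proof -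
      have "L * cos (pi*x) \<le> L" using L by (intro mult_left_le) auto
      moreover have "pi * sin (pi*x) \<le> pi" by (intro mult_left_le) auto
      ultimately show ?thesis using pi_less_4 by linarith
    qed
    hence "E * (L * cos (pi*x) + pi * sin (pi*x)) \<le> E * (L + 4)" using E0 by simp
    also have "\<dots> < L * P"
    proof -
      have "P / E = phi powr (2*x+2)" unfolding P_def E_def using phi_pos by (simp add: powr_diff[symmetric])
      also have "\<dots> \<ge> phi powr 6" using False phi_bounds by (intro powr_mono) auto
      finally have "P / E \<ge> phi powr 6" .
      moreover have "phi powr 6 = phi ^ 6" using phi_pos by (intro powr_numeral) simp
      moreover have "phi ^ 6 \<ge> 1.6 ^ 6" using phi_bounds by (intro power_mono) auto
      moreover have "(16::real) \<le> 1.6 ^ 6" by (simp add: eval_nat_numeral)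
      ultimately have "P / E \<ge> 16" by linarith
      hence "P \<ge> 16 * E" using E0 by (simp add: field_simps)
      hence "L * P \<ge> L * (16 * E)" using L by (intro mult_left_mono) auto
      moreover have "E * (L + 4) < L * (16 * E)" using E0 L by (simp add: algebra_simps)
      ultimately show ?thesis by simp
    qed
    finally show ?thesis .
  qed
  have "dF x = cc * (L * P - E * (L * cos (pi*x) + pi * sin (pi*x)))"
    unfolding dF_def L_def P_def E_def by (simp add: algebra_simps)
  thus ?thesis using key cc_pos by simp
qed


lemma frakF_less: assumes "1 \<le> x" "x < y" shows "frakF x < frakF y"
  using assms(2)
proof (rule DERIV_pos_imp_increasing)
  fix z assume "x \<le> z" "z \<le> y"
  hence "dF z > 0" using assms by (intro dF_pos) simp
  thus "\<exists>d. (frakF has_real_derivative d) (at z) \<and> 0 < d" using frakF_deriv by blast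
qed

lemma frakF_less_iff: "1 \<le> x \<Longrightarrow> 1 \<le> y \<Longrightarrow> frakF x < frakF y \<longleftrightarrow> x < y"
  by (metis frakF_less not_less_iff_gr_or_eq order_less_asym)

lemma frakF_le_iff: "1 \<le> x \<Longrightarrow> 1 \<le> y \<Longrightarrow> frakF x \<le> frakF y \<longleftrightarrow> x \<le> y"
  by (meson frakF_less_iff not_less)

lemma frakF_cont: "continuous_on S frakF"
  using frakF_deriv by (meson DERIV_isCont continuous_at_imp_continuous_on)

lemma frakF_one: "frakF 1 = 1"
  using frakF_fib[of 1] by simp

lemma frakF_ge1: "1 \<le> x \<Longrightarrow> 1 \<le> frakF x"
  using frakF_le_iff[of 1 x] frakF_one by simp

lemma FibF_ge: "FibF n \<ge> 1 \<and> FibF n \<ge> n"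
  by (induction n rule: FibF.induct) auto

lemma frakF_inv: assumes "1 \<le> y" shows "1 \<le> frakF_inv y" "frakF (frakF_inv y) = y"
proof -
  define b where "b = nat \<lceil>y\<rceil>"
  have "y \<le> real b" unfolding b_def by linarith
  also have "real b \<le> frakF (real b)" using FibF_ge[of b] frakF_fib[of b] by simp
  finally have yb: "y \<le> frakF (real b)" .
  have "1 \<le> real b" using assms \<open>y \<le> real b\<close> by simp
  then obtain x where x: "1 \<le> x" "x \<le> real b" "frakF x = y"
    using IVT'[of frakF 1 y "real b"] yb assms frakF_one frakF_cont by auto
  have ex: "\<exists>!x. 1 \<le> x \<and> frakF x = y"
  proof (rule ex1I[of _ x])
    fix z assume "1 \<le> z \<and> frakF z = y"
    thus "z = x" using x frakF_less_iff by (metis order_less_irrefl linorder_neqE_linordered_idom)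
  qed (use x in auto)
  have "1 \<le> frakF_inv y \<and> frakF (frakF_inv y) = y"
    unfolding frakF_inv_def by (rule theI'[OF ex])
  thus "1 \<le> frakF_inv y" "frakF (frakF_inv y) = y" by auto
qed


lemma root_pow: assumes "0 \<le> x" "a > 0" shows "(x ^ a) powr (1 / real a) = x"
proof (cases "x = 0")
  case False
  hence "x ^ a = x powr real a" using assms by (simp add: powr_realpow)
  thus ?thesis using assms False by (simp add: powr_powr)
qed (use assms in simp)

lemma pow_root: assumes "0 \<le> t" "a > 0" shows "(t powr (1 / real a)) ^ a = t"
proof (cases "t = 0")
  case False
  thus ?thesis using assms by (simp add: powr_power)
qed (use assms in simp)

lemma rpow_le: assumes "0 \<le> x" "0 \<le> t" "a > 0"
  shows "t \<le> x ^ a \<longleftrightarrow> t powr (1 / real a) \<le> x"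
proof
  assume "t \<le> x ^ a"
  hence "t powr (1 / real a) \<le> (x ^ a) powr (1 / real a)" using assms by (intro powr_mono2) auto
  thus "t powr (1 / real a) \<le> x" using root_pow assms by simp
next
  assume h: "t powr (1 / real a) \<le> x"
  show "t \<le> x ^ a"
  proof (rule ccontr)
    assume "\<not> t \<le> x ^ a"
    hence "(x ^ a) powr (1 / real a) < t powr (1 / real a)" using assms by (intro powr_less_mono2) auto
    thus False using root_pow assms h by simp
  qed
qed

lemma rpow_less: assumes "0 \<le> x" "0 \<le> t" "a > 0"
  shows "x ^ a < t \<longleftrightarrow> x < t powr (1 / real a)"
  using rpow_le[OF assms] by linarith

lemma pow_diff_ge: assumes "1 \<le> y" "y \<le> (x::real)" "a > 0" shows "x - y \<le> x ^ a - y ^ a"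
  using assms(3)
proof (induction a)
  case (Suc a)
  show ?case
  proof (cases "a = 0")
    case False
    hence ih: "x - y \<le> x ^ a - y ^ a" using Suc by simp
    have "x ^ Suc a - y ^ Suc a = x * (x ^ a - y ^ a) + (x - y) * y ^ a" by (simp add: algebra_simps)
    moreover have "x * (x ^ a - y ^ a) \<ge> 0" using ih assms by simp
    moreover have "(x - y) * y ^ a \<ge> (x - y)" using assms by (simp add: mult_le_cancel_left1)
    ultimately show ?thesis by linarith
  qed simp
qed simp

lemma root_lip: assumes "1 \<le> s" "1 \<le> t" "a > 0"
  shows "\<bar>t powr (1 / real a) - s powr (1 / real a)\<bar> \<le> \<bar>t - s\<bar>"
proof -
  have *: "y powr (1 / real a) - x powr (1 / real a) \<le> y - x" if "1 \<le> x" "x \<le> y" for x y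
  proof -
    have "x powr (1 / real a) \<ge> 1" using that by (intro ge_one_powr_ge_zero) auto
    moreover have "x powr (1 / real a) \<le> y powr (1 / real a)" using that assms by (intro powr_mono2) auto
    ultimately have "y powr (1 / real a) - x powr (1 / real a) \<le> (y powr (1 / real a))^a - (x powr (1 / real a))^a"
      using assms by (intro pow_diff_ge) auto
    thus ?thesis using pow_root assms that by simp
  qed
  show ?thesis
  proof (cases "s \<le> t")
    case True
    thus ?thesis using *[of s t] assms by (simp add: powr_mono2)
  next
    case False
    thus ?thesis using *[of t s] assms by (simp add: powr_mono2)
  qed
qed

lemma cc_le1: "cc \<le> 1" unfolding cc_def using phi_bounds sqrt5_bounds by simp

lemma cc_phi: "cc * phi \<ge> 1"
proof -
  have "cc * phi = (phi + 1) / sqrt 5" unfolding cc_def using phi_sq by (simp add: power2_eq_square)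
  moreover have "phi + 1 \<ge> sqrt 5" unfolding phi_def using sqrt5_bounds by (simp add: field_simps)
  ultimately show ?thesis using sqrt5_bounds by simp
qed

lemma frakF_approx: assumes "1 \<le> x" "a > 0"
  shows "\<bar>frakF x powr (1 / real a) - cc powr (1 / real a) * phi powr (x / real a)\<bar> \<le> 1"
proof -
  have eq: "cc powr (1 / real a) * phi powr (x / real a) = (cc * phi powr x) powr (1 / real a)"
    by (simp add: powr_mult powr_powr)
  have "phi powr x \<ge> phi powr 1" using phi_bounds assms by (intro powr_mono) auto
  hence "cc * phi powr x \<ge> cc * phi" using cc_pos by simp
  hence p1: "cc * phi powr x \<ge> 1" using cc_phi by simp
  have "\<bar>frakF x - cc * phi powr x\<bar> = cc * phi powr (-x-2) * \<bar>cos (pi*x)\<bar>"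
    unfolding frakF_alt using cc_pos by (simp add: algebra_simps abs_mult)
  also have "\<dots> \<le> 1 * 1 * 1"
  proof (intro mult_mono)
    have "phi powr (-x-2) \<le> phi powr 0" using phi_bounds assms by (intro powr_mono) auto
    thus "phi powr (-x-2) \<le> 1" using phi_pos by simp
  qed (use cc_le1 cc_pos in auto)
  finally have "\<bar>frakF x - cc * phi powr x\<bar> \<le> 1" by simp
  moreover have "\<bar>frakF x powr (1 / real a) - (cc * phi powr x) powr (1 / real a)\<bar> \<le> \<bar>frakF x - cc * phi powr x\<bar>"
    using root_lip frakF_ge1 assms p1 by simp
  ultimately show ?thesis unfolding eq by linarith
qed

lemma card_interval: assumes "0 \<le> u" "u \<le> v"
  shows "real (card {n::nat. u \<le> real n \<and> real n \<le> v}) \<le> v - u + 1"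
        "real (card {n::nat. u \<le> real n \<and> real n \<le> v}) \<ge> v - u - 1"
proof -
  have eq: "{n::nat. u \<le> real n \<and> real n \<le> v} = {nat \<lceil>u\<rceil>..nat \<lfloor>v\<rfloor>}"
    using assms by (auto simp: le_nat_iff nat_le_iff ceiling_le_iff le_floor_iff)
  have "\<lceil>u\<rceil> \<le> \<lfloor>v\<rfloor> + 1" using assms by linarith
  hence c: "real (card {nat \<lceil>u\<rceil>..nat \<lfloor>v\<rfloor>}) = real_of_int \<lfloor>v\<rfloor> + 1 - real_of_int \<lceil>u\<rceil>"
    using assms by (simp add: of_nat_diff nat_le_iff)
  show "real (card {n::nat. u \<le> real n \<and> real n \<le> v}) \<le> v - u + 1"
    unfolding eq c by linarith
  show "real (card {n::nat. u \<le> real n \<and> real n \<le> v}) \<ge> v - u - 1"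
    unfolding eq c by linarith
qed

lemma card_A: assumes "1 \<le> w"
  shows "real (card {n::nat. 1 \<le> n \<and> real n < w}) \<le> w"
        "real (card {n::nat. 1 \<le> n \<and> real n < w}) \<ge> w - 1"
proof -
  have eq: "{n::nat. 1 \<le> n \<and> real n < w} = {1..<nat \<lceil>w\<rceil>}"
    using assms by (auto simp: zless_nat_eq_int_zless less_ceiling_iff)
  have w1: "\<lceil>w\<rceil> \<ge> 1" using assms by linarith
  hence "nat \<lceil>w\<rceil> \<ge> 1" by linarith
  hence "real (nat \<lceil>w\<rceil> - 1) = real (nat \<lceil>w\<rceil>) - 1" by (simp add: of_nat_diff)
  also have "real (nat \<lceil>w\<rceil>) = real_of_int \<lceil>w\<rceil>" using w1 by simp
  finally have c: "real (card {1..<nat \<lceil>w\<rceil>}) = real_of_int \<lceil>w\<rceil> - 1"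
    by simp
  show "real (card {n::nat. 1 \<le> n \<and> real n < w}) \<le> w" unfolding eq c by linarith
  show "real (card {n::nat. 1 \<le> n \<and> real n < w}) \<ge> w - 1" unfolding eq c by linarith
qed


lemma rpow_le2: assumes "0 \<le> x" "0 \<le> t" "a > 0"
  shows "x ^ a \<le> t \<longleftrightarrow> x \<le> t powr (1 / real a)"
proof
  assume "x ^ a \<le> t"
  hence "(x ^ a) powr (1 / real a) \<le> t powr (1 / real a)" using assms by (intro powr_mono2) auto
  thus "x \<le> t powr (1 / real a)" using root_pow assms by simp
next
  assume h: "x \<le> t powr (1 / real a)"
  show "x ^ a \<le> t"
  proof (rule ccontr)
    assume "\<not> x ^ a \<le> t"
    hence "t powr (1 / real a) < (x ^ a) powr (1 / real a)" using assms by (intro powr_less_mono2) auto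
    thus False using root_pow assms h by simp
  qed
qed

lemma FibF_Suc: "FibF n \<le> FibF (Suc n)"
  by (induction n rule: FibF.induct) auto

lemma FibF_mono: "j \<le> k \<Longrightarrow> FibF j \<le> FibF k"
  using FibF_Suc by (rule lift_Suc_mono_le)

lemma finite_le: "finite {n::nat. real n \<le> v}"
  by (rule finite_subset[of _ "{..nat \<lceil>v\<rceil>}"]) (auto, linarith)

theorem lemma4p9:
  fixes a :: nat and \<beta> :: real
  assumes "a > 0" and "0 \<le> \<beta>" and "\<beta> \<le> 1"
  shows "(\<lambda>m. real (card {n \<in> A_set a m. frac (frakF_inv (real (n ^ a))) \<le> \<beta>})
               / real (card (A_set a m))
             - (phi powr (\<beta> / real a) - 1) / (phi powr (1 / real a) - 1))
         \<in> O(\<lambda>m. real m * phi powr (- real m / real a))"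
proof -
  define C where "C = cc powr (1/real a)"
  define q where "q = phi powr (1/real a)"
  define qb where "qb = phi powr (\<beta>/real a)"
  define r where "r = (qb - 1)/(q - 1)"
  define Fk where "Fk k = real (FibF k)" for k
  define I where "I k = {n::nat. Fk k \<le> real n ^ a \<and> real n ^ a \<le> frakF (real k + \<beta>) \<and> real n ^ a < Fk (Suc k)}" for k
  define J where "J k = {n::nat. Fk k \<le> real n ^ a \<and> real n ^ a \<le> frakF (real k + \<beta>)}" for k
  define T where "T m = {n \<in> A_set a m. frac (frakF_inv (real (n ^ a))) \<le> \<beta>}" for m
  define Q where "Q x = C * phi powr (x / real a)" for x
  have a0: "a > 0" using assms by simp
  have q1: "q > 1" unfolding q_def using phi_bounds a0 by (intro gr_one_powr) auto
  have Qk: "Q (real k) = C * q^k" for k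
    unfolding Q_def q_def using phi_pos by (simp add: powr_power)
  have Qkb: "Q (real k + \<beta>) = C * q^k * qb" for k
  proof -
    have "phi powr ((real k + \<beta>) / real a) = phi powr (real k / real a) * qb"
      unfolding qb_def by (simp add: add_divide_distrib powr_add)
    thus ?thesis unfolding Q_def using Qk[of k] unfolding Q_def by auto
  qed
  have C0: "C > 0" unfolding C_def using cc_pos by simp
  have qb1: "qb \<ge> 1" unfolding qb_def using phi_bounds assms by (intro ge_one_powr_ge_zero) auto
  have qbq: "qb \<le> q" unfolding qb_def q_def using phi_bounds assms a0
    by (intro powr_mono) (auto simp: divide_right_mono)
  have r0: "0 \<le> r" unfolding r_def using qb1 q1 by simp
  have r1: "r \<le> 1" unfolding r_def using qbq q1 by simp
  have Fk_frak: "Fk k = frakF (real k)" for k unfolding Fk_def by (simp add: frakF_fib)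
  have Fk1: "Fk k \<ge> 1" for k unfolding Fk_def using FibF_ge[of k] by simp
  have Fk_mono: "j \<le> k \<Longrightarrow> Fk j \<le> Fk k" for j k unfolding Fk_def using FibF_mono by simp
  have T_eq: "T m = (\<Union>k\<in>{1..<m}. I k)" for m
  proof (intro equalityI subsetI)
    fix n assume "n \<in> T m"
    hence n1: "1 \<le> n" and nw: "real n < Fk m powr (1 / real a)"
      and fr: "frac (frakF_inv (real n ^ a)) \<le> \<beta>"
      unfolding T_def A_set_def Fk_def by auto
    define t where "t = real n ^ a"
    have t1: "t \<ge> 1" unfolding t_def using n1 by simp
    have tm: "t < Fk m" unfolding t_def using rpow_less[of "real n" "Fk m" a] nw a0 Fk1[of m] by simp
    define y where "y = frakF_inv t"
    have y1: "1 \<le> y" and fy: "frakF y = t" unfolding y_def using frakF_inv t1 by auto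
    define k where "k = nat \<lfloor>y\<rfloor>"
    have rk: "real k = real_of_int \<lfloor>y\<rfloor>" unfolding k_def using y1 by simp
    have k1: "k \<ge> 1" unfolding k_def using y1 by linarith
    have ky: "real k \<le> y" "y < real k + 1" using rk by linarith+
    have kyb: "y \<le> real k + \<beta>" using fr rk unfolding y_def t_def frac_def by simp
    have "Fk k \<le> t" unfolding Fk_frak fy[symmetric] using ky k1 y1 by (subst frakF_le_iff) auto
    moreover have "t \<le> frakF (real k + \<beta>)" unfolding fy[symmetric] using kyb y1 assms
      by (subst frakF_le_iff) auto
    moreover have "t < Fk (Suc k)" unfolding Fk_frak fy[symmetric] using ky y1
      by (subst frakF_less_iff) auto
    moreover have "k < m"
    proof (rule ccontr)
      assume "\<not> k < m"
      hence "Fk m \<le> Fk k" using Fk_mono by simp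
      thus False using \<open>Fk k \<le> t\<close> tm by simp
    qed
    ultimately show "n \<in> (\<Union>k\<in>{1..<m}. I k)" using k1 unfolding I_def t_def by auto
  next
    fix n assume "n \<in> (\<Union>k\<in>{1..<m}. I k)"
    then obtain k where k: "1 \<le> k" "k < m" and nI: "n \<in> I k" by auto
    define t where "t = real n ^ a"
    have tk: "Fk k \<le> t" "t \<le> frakF (real k + \<beta>)" "t < Fk (Suc k)" using nI unfolding I_def t_def by auto
    have t1: "t \<ge> 1" using tk Fk1[of k] by simp
    have n1: "1 \<le> n" using t1 a0 unfolding t_def by (cases n) (auto simp: power_0_left)
    have tm: "t < Fk m" using tk Fk_mono[of "Suc k" m] k by simp
    have nw: "real n < Fk m powr (1 / real a)" using rpow_less[of "real n" "Fk m" a] tm a0 Fk1[of m] unfolding t_def by simp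
    define y where "y = frakF_inv t"
    have y1: "1 \<le> y" and fy: "frakF y = t" unfolding y_def using frakF_inv t1 by auto
    have ky: "real k \<le> y" using tk(1) y1 k unfolding Fk_frak fy[symmetric] by (subst (asm) frakF_le_iff) auto
    have ky2: "y < real k + 1" using tk(3) y1 k unfolding Fk_frak fy[symmetric] by (subst (asm) frakF_less_iff) auto
    have kyb: "y \<le> real k + \<beta>" using tk(2) y1 k assms unfolding fy[symmetric] by (subst (asm) frakF_le_iff) auto
    have "\<lfloor>y\<rfloor> = int k" using ky ky2 by (simp add: floor_eq_iff)
    hence "frac y \<le> \<beta>" using kyb unfolding frac_def by simp
    thus "n \<in> T m" using n1 nw unfolding T_def A_set_def y_def t_def Fk_def by simp
  qed
  have npow: "real n \<le> real n ^ a" for n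
    using a0 by (cases n) (auto intro: self_le_power)
  have finJ: "finite (J k)" for k
    by (rule finite_subset[OF _ finite_le[of "frakF (real k + \<beta>)"]])
       (auto simp: J_def intro: order_trans[OF npow])
  have IJ: "I k \<subseteq> J k" for k unfolding I_def J_def by auto
  have finI: "finite (I k)" for k using finJ IJ by (rule finite_subset[rotated])
  have disj: "I i \<inter> I j = {}" if "1 \<le> i" "1 \<le> j" "i \<noteq> j" for i j
  proof -
    have *: "I i \<inter> I j = {}" if "i < j" for i j
    proof -
      have "Fk (Suc i) \<le> Fk j" using that Fk_mono by simp
      thus ?thesis unfolding I_def by auto
    qed
    show ?thesis using that *[of i j] *[of j i] by (cases "i < j") auto
  qed
  have cardT: "real (card (T m)) = (\<Sum>k\<in>{1..<m}. real (card (I k)))" for m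
  proof -
    have "card (T m) = (\<Sum>k\<in>{1..<m}. card (I k))"
      unfolding T_eq using finI disj by (subst card_UN_disjoint) auto
    thus ?thesis by simp
  qed
  have Ibound: "\<bar>real (card (I k)) - (Q (real k + \<beta>) - Q (real k))\<bar> \<le> 4" if k1: "1 \<le> k" for k
  proof -
    define u where "u = Fk k powr (1 / real a)"
    define v where "v = frakF (real k + \<beta>) powr (1 / real a)"
    have Jeq: "J k = {n::nat. u \<le> real n \<and> real n \<le> v}"
      unfolding J_def u_def v_def using a0 Fk1[of k] frakF_ge1[of "real k + \<beta>"] k1 assms
      by (auto simp: rpow_le rpow_le2)
    have Fkb: "Fk k \<le> frakF (real k + \<beta>)" unfolding Fk_frak using k1 assms by (subst frakF_le_iff) auto
    have uv: "0 \<le> u" "u \<le> v" unfolding u_def v_def using Fkb Fk1[of k] by (auto intro: powr_mono2)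
    have cJ: "real (card (J k)) \<le> v - u + 1" "real (card (J k)) \<ge> v - u - 1"
      unfolding Jeq using card_interval[OF uv] by auto
    have cIJ: "card (I k) \<le> card (J k)" using IJ finJ by (rule card_mono[rotated])
    define K where "K = J k \<inter> {n. real n ^ a = Fk (Suc k)}"
    have "J k \<subseteq> I k \<union> K"
    proof
      fix n assume nJ: "n \<in> J k"
      show "n \<in> I k \<union> K"
      proof (cases "real n ^ a < Fk (Suc k)")
        case True thus ?thesis using nJ unfolding I_def J_def by auto
      next
        case False
        have "frakF (real k + \<beta>) \<le> Fk (Suc k)" unfolding Fk_frak using assms k1 by (subst frakF_le_iff) auto
        hence "real n ^ a = Fk (Suc k)" using False nJ unfolding J_def by auto
        thus ?thesis using nJ unfolding K_def by auto
      qed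
    qed
    hence "card (J k) \<le> card (I k \<union> K)" using finI finJ unfolding K_def by (intro card_mono) auto
    also have "\<dots> \<le> card (I k) + card K" by (rule card_Un_le)
    also have "card K \<le> 1"
    proof -
      have "finite K" unfolding K_def using finJ by auto
      moreover have "\<forall>x\<in>K. \<forall>y\<in>K. x = y"
      proof (intro ballI)
        fix x y assume "x \<in> K" "y \<in> K"
        hence "real x ^ a = real y ^ a" unfolding K_def by simp
        hence "real x = real y" using a0 by (subst (asm) power_eq_iff_eq_base) auto
        thus "x = y" by simp
      qed
      ultimately show ?thesis using card_le_Suc0_iff_eq by auto
    qed
    finally have cJI: "card (J k) \<le> card (I k) + 1" by simp
    have au: "\<bar>u - Q (real k)\<bar> \<le> 1" unfolding u_def Fk_frak Q_def C_def
      using frakF_approx[of "real k" a] k1 a0 by simp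
    have av: "\<bar>v - Q (real k + \<beta>)\<bar> \<le> 1" unfolding v_def Q_def C_def
      using frakF_approx[of "real k + \<beta>" a] k1 a0 assms by simp
    show ?thesis using cJ cIJ cJI au av by linarith
  qed
  have geo: "(q - 1) * (\<Sum>k\<in>{1..<Suc m}. q^k) = q^(Suc m) - q" for m
    by (induction m) (auto simp: algebra_simps)
  have S_est: "\<bar>real (card (T m)) - r * C * (q^m - q)\<bar> \<le> 4 * real m" if m1: "m \<ge> 1" for m
  proof -
    obtain m' where m': "m = Suc m'" using m1 by (cases m) auto
    have sumQ: "(\<Sum>k\<in>{1..<m}. Q (real k + \<beta>) - Q (real k)) = r * C * (q^m - q)"
    proof -
      have "(\<Sum>k\<in>{1..<m}. Q (real k + \<beta>) - Q (real k)) = C * (qb - 1) * (\<Sum>k\<in>{1..<m}. q^k)"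
        unfolding Qk Qkb by (simp add: sum_distrib_left algebra_simps)
      also have "(\<Sum>k\<in>{1..<m}. q^k) = (q^m - q) / (q - 1)"
        using geo[of m'] q1 unfolding m' by (simp add: field_simps)
      finally show ?thesis unfolding r_def by simp
    qed
    have "\<bar>real (card (T m)) - r * C * (q^m - q)\<bar> = \<bar>\<Sum>k\<in>{1..<m}. real (card (I k)) - (Q (real k + \<beta>) - Q (real k))\<bar>"
      unfolding cardT sumQ[symmetric] by (simp add: sum_subtractf)
    also have "\<dots> \<le> (\<Sum>k\<in>{1..<m}. \<bar>real (card (I k)) - (Q (real k + \<beta>) - Q (real k))\<bar>)" by (rule sum_abs)
    also have "\<dots> \<le> (\<Sum>k\<in>{1..<m}. 4)" using Ibound by (intro sum_mono) auto
    also have "\<dots> \<le> 4 * real m" by simp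
    finally show ?thesis .
  qed
  have N_est: "\<bar>real (card (A_set a m)) - C * q^m\<bar> \<le> 2" if m1: "m \<ge> 1" for m
  proof -
    define w where "w = Fk m powr (1 / real a)"
    have w1: "w \<ge> 1" unfolding w_def using Fk1[of m] by (intro ge_one_powr_ge_zero) auto
    have Aeq: "A_set a m = {n. 1 \<le> n \<and> real n < w}" unfolding A_set_def w_def Fk_def by simp
    have "\<bar>w - Q (real m)\<bar> \<le> 1" unfolding w_def Fk_frak Q_def C_def
      using frakF_approx[of "real m" a] m1 a0 by simp
    thus ?thesis using card_A[OF w1] unfolding Aeq Qk by linarith
  qed
  define K where "K = 2 * (6 + C * q) / C"
  have ev: "eventually (\<lambda>m. m \<ge> 1 \<and> C * q^m \<ge> 4) sequentially"
  proof -
    obtain n0 where n0: "4 / C < q ^ n0" using real_arch_pow[OF q1] by blast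
    show ?thesis unfolding eventually_sequentially
    proof (intro exI allI impI)
      fix m assume "max n0 1 \<le> m"
      hence "q ^ n0 \<le> q ^ m" "m \<ge> 1" using q1 by (auto intro: power_increasing)
      hence "q^m \<ge> 4 / C" using n0 by simp
      thus "m \<ge> 1 \<and> C * q^m \<ge> 4" using C0 \<open>m \<ge> 1\<close> by (simp add: field_simps)
    qed
  qed
  show ?thesis
  proof (rule bigoI[where c = K])
    show "eventually (\<lambda>m. norm (real (card {n \<in> A_set a m. frac (frakF_inv (real (n ^ a))) \<le> \<beta>})
               / real (card (A_set a m)) - (phi powr (\<beta> / real a) - 1) / (phi powr (1 / real a) - 1))
           \<le> K * norm (real m * phi powr (- real m / real a))) sequentially"
      using ev
    proof eventually_elim
      case (elim m)
      hence m1: "m \<ge> 1" and big: "C * q^m \<ge> 4" by auto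
      define S where "S = real (card (T m))"
      define N where "N = real (card (A_set a m))"
      have hN: "N \<ge> C * q^m / 2" using N_est[OF m1] big unfolding N_def by linarith
      have qm: "q^m > 0" using q1 by simp
      have "C * q^m > 0" using C0 qm by simp
      hence Npos: "N > 0" using hN by linarith
      have "\<bar>S - r * N\<bar> \<le> \<bar>S - r * C * (q^m - q)\<bar> + r * \<bar>C * q^m - N\<bar> + r * C * q"
      proof -
        have "S - r * N = (S - r * C * (q^m - q)) + r * (C * q^m - N) - r * C * q" by (simp add: algebra_simps)
        moreover have "\<bar>r * (C * q^m - N)\<bar> = r * \<bar>C * q^m - N\<bar>" using r0 by (simp add: abs_mult)
        moreover have "\<bar>r * C * q\<bar> = r * C * q" using r0 C0 q1 by simp
        moreover have "\<bar>X + Y - Z\<bar> \<le> \<bar>X\<bar> + \<bar>Y\<bar> + \<bar>Z\<bar>" for X Y Z :: real by arith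
        ultimately show ?thesis by metis
      qed
      also have "\<dots> \<le> 4 * real m + 1 * 2 + 1 * C * q"
        using S_est[OF m1] N_est[OF m1] r0 r1 C0 q1 unfolding S_def N_def
        by (intro add_mono mult_mono) (auto simp: abs_minus_commute)
      also have "\<dots> \<le> (6 + C * q) * real m"
      proof -
        have "C * q * 1 \<le> C * q * real m" using m1 C0 q1 by (intro mult_left_mono) auto
        thus ?thesis using m1 by (simp add: algebra_simps)
      qed
      finally have num: "\<bar>S - r * N\<bar> \<le> (6 + C * q) * real m" .
      have "S / N - r = (S - r * N) / N" using Npos by (simp add: diff_divide_distrib)
      hence "\<bar>S / N - r\<bar> = \<bar>S - r * N\<bar> / N" using Npos by simp
      also have "\<dots> \<le> (6 + C * q) * real m / (C * q^m / 2)"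
      proof (rule frac_le)
        show "0 \<le> (6 + C * q) * real m" using C0 q1 by simp
        show "0 < C * q ^ m / 2" using C0 qm by simp
      qed (use num hN in auto)
      also have "\<dots> = K * (real m / q^m)" unfolding K_def using C0 qm by (simp add: divide_simps)
      finally have fin: "\<bar>S / N - r\<bar> \<le> K * (real m / q^m)" .
      have "phi powr (- real m / real a) = 1 / q^m"
        unfolding q_def using phi_pos by (simp add: powr_power powr_minus_divide)
      hence g: "norm (real m * phi powr (- real m / real a)) = real m / q^m" using qm by simp
      show ?case using fin unfolding g S_def N_def T_def r_def qb_def q_def by simp
    qed
  qed
qed

end
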